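(* Let $n\ge3$ and $L>1$, and define $$\sigma_{1,2}=\frac{(L+n-1)+L^n(1+L(n-1))+\sqrt{\left((L+n-1)+L^n(1+L(n-1))\right)^2-4L(L^n-1)^2(n-1)}}{2L(L^n-1)},$$ $$\sigma_{2,1}=\frac{L^{n+2}(2+Ln)+(n+2L)-\sqrt{\left(L^{n+2}(2+Ln)+(n+2L)\right)^2-8Ln(L^{n+2}-1)^2}}{2L(L^{n+2}-1)}.$$ Then $\sigma_{2,1}\le\sigma_{1,2}$. *)

theory Defs
  imports Complex_Main
begin

end

theory Submission imports Defs begin

lemma poly3:
  fixes t :: real assumes "t \<ge> 0"
  shows "8*3*(1+t)*((1+t)^3-1)*((1+t)^5-1) \<le> ((1+t) + 3 - 1 + (1+t)^3*(1+(1+t)*(3-1))) * ((1+t)^5*(2+(1+t)*3) + (3+2*(1+t)))"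
proof -
  have eq: "((1+t) + 3 - 1 + (1+t)^3*(1+(1+t)*(3-1))) * ((1+t)^5*(2+(1+t)*3) + (3+2*(1+t))) - 8*3*(1+t)*((1+t)^3-1)*((1+t)^5-1)
    = 60 + 300*t + t^2 * (540 + 360*t - 85*t^2 - 255*t^3 - 59*t^4 + 127*t^5 + 119*t^6 + 43*t^7 + 6*t^8)"
    by (simp add: algebra_simps power2_eq_square power3_eq_cube power_numeral_reduce)
  have R: "540 + 360*t - 85*t^2 - 255*t^3 - 59*t^4 + 127*t^5 + 119*t^6 + 43*t^7 + 6*t^8 \<ge> 0"
  proof (cases "t \<le> 1")
    case True
    have "t^2 \<le> 1" "t^3 \<le> 1" "t^4 \<le> 1" using True assms by (auto intro: power_le_one)
    moreover have "0 \<le> 127*t^5 + 119*t^6 + 43*t^7 + 6*t^8" using assms by simp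
    ultimately show ?thesis using assms by linarith
  next
    case False
    define s where "s = t - 1"
    have s0: "s \<ge> 0" using False s_def by simp
    have "540 + 360*t - 85*t^2 - 255*t^3 - 59*t^4 + 127*t^5 + 119*t^6 + 43*t^7 + 6*t^8
       = 796 + 887*s + 2922*s^2 + 5000*s^3 + 4286*s^4 + 2080*s^5 + 588*s^6 + 91*s^7 + 6*s^8"
      unfolding s_def by (simp add: algebra_simps power2_eq_square power3_eq_cube power_numeral_reduce)
    also have "\<dots> \<ge> 0" using s0 by simp
    finally show ?thesis .
  qed
  have "0 \<le> 60 + 300*t + t^2 * (540 + 360*t - 85*t^2 - 255*t^3 - 59*t^4 + 127*t^5 + 119*t^6 + 43*t^7 + 6*t^8)"
    using R assms by simp
  then show ?thesis using eq by linarith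
qed

lemma poly4:
  fixes t :: real assumes "t \<ge> 0"
  shows "8*4*(1+t)*((1+t)^4-1)*((1+t)^6-1) \<le> ((1+t) + 4 - 1 + (1+t)^4*(1+(1+t)*(4-1))) * ((1+t)^6*(2+(1+t)*4) + (4+2*(1+t)))"
proof -
  have eq: "((1+t) + 4 - 1 + (1+t)^4*(1+(1+t)*(4-1))) * ((1+t)^6*(2+(1+t)*4) + (4+2*(1+t))) - 8*4*(1+t)*((1+t)^4-1)*((1+t)^6-1)
    = 96 + 576*t^1 + 1416*t^2 + 1800*t^3 + 1404*t^4 + 1152*t^5 + 1790*t^6 + 2562*t^7 + 2404*t^8 + 1450*t^9 + 552*t^10 + 122*t^11 + 12*t^12"
    by (simp add: algebra_simps power2_eq_square power3_eq_cube power_numeral_reduce)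
  have "0 \<le> 96 + 576*t^1 + 1416*t^2 + 1800*t^3 + 1404*t^4 + 1152*t^5 + 1790*t^6 + 2562*t^7 + 2404*t^8 + 1450*t^9 + 552*t^10 + 122*t^11 + 12*t^12"
    using assms by simp
  then show ?thesis using eq by linarith
qed

lemma poly5:
  fixes t :: real assumes "t \<ge> 0"
  shows "8*5*(1+t)*((1+t)^5-1)*((1+t)^7-1) \<le> ((1+t) + 5 - 1 + (1+t)^5*(1+(1+t)*(5-1))) * ((1+t)^7*(2+(1+t)*5) + (5+2*(1+t)))"
proof -
  have eq: "((1+t) + 5 - 1 + (1+t)^5*(1+(1+t)*(5-1))) * ((1+t)^7*(2+(1+t)*5) + (5+2*(1+t))) - 8*5*(1+t)*((1+t)^5-1)*((1+t)^7-1)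
    = 140 + 980*t^1 + 3080*t^2 + 5740*t^3 + 8190*t^4 + 11690*t^5 + 17906*t^6 + 24584*t^7 + 26408*t^8 + 21180*t^9 + 12430*t^10 + 5198*t^11 + 1471*t^12 + 253*t^13 + 20*t^14"
    by (simp add: algebra_simps power2_eq_square power3_eq_cube power_numeral_reduce)
  have "0 \<le> 140 + 980*t^1 + 3080*t^2 + 5740*t^3 + 8190*t^4 + 11690*t^5 + 17906*t^6 + 24584*t^7 + 26408*t^8 + 21180*t^9 + 12430*t^10 + 5198*t^11 + 1471*t^12 + 253*t^13 + 20*t^14"
    using assms by simp
  then show ?thesis using eq by linarith
qed

lemma key_big:
  fixes N L x y :: real
  assumes N: "N \<ge> 6" and L: "L \<ge> 1" and x: "x \<ge> 1" and y: "y \<ge> 1"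
  shows "8*N*L*(x-1)*(y-1) \<le> (L + N - 1 + x*(1+L*(N-1))) * (y*(2+L*N) + (N+2*L))"
proof -
  define c where "c = 1+L*(N-1)"
  define b where "b = 2+L*N"
  have cb: "c*b - 8*N*L = (L-1)*(N*(N-1)*L - 2) + L*(N*N-6*N)"
    unfolding c_def b_def by (simp add: algebra_simps)
  have n30: "N*(N-1) \<ge> 6*5" using N by (intro mult_mono) auto
  have "N*(N-1)*L \<ge> N*(N-1)*1" using L n30 by (intro mult_left_mono) auto
  hence h1: "N*(N-1)*L - 2 \<ge> 0" using n30 by linarith
  have h2: "N*N-6*N \<ge> 0" using N by (simp add: mult_right_mono flip: left_diff_distrib)
  have cb0: "c*b - 8*N*L \<ge> 0" unfolding cb using h1 h2 L by simp
  have eq: "(L + N - 1 + x*(1+L*(N-1))) * (y*(2+L*N) + (N+2*L)) - 8*N*L*(x-1)*(y-1)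
     = (x*y)*(c*b - 8*N*L) + y*b*(L+N-1) + x*c*(N+2*L) + 8*N*L*(x+y-1) + (L+N-1)*(N+2*L)"
    unfolding c_def b_def by (simp add: algebra_simps)
  have c0: "c \<ge> 0" "b \<ge> 0" unfolding c_def b_def using N L by auto
  have "0 \<le> (x*y)*(c*b - 8*N*L) + y*b*(L+N-1) + x*c*(N+2*L) + 8*N*L*(x+y-1) + (L+N-1)*(N+2*L)"
    using cb0 c0 N L x y by (intro add_nonneg_nonneg mult_nonneg_nonneg) auto
  then show ?thesis using eq by linarith
qed

lemma sig21:
  fixes L N y B :: real
  assumes L: "L > 0" and y: "y > 1" and N: "N \<ge> 0" and B: "B \<ge> y*(2+L*N)"
  shows "(B - sqrt(B^2 - 8*L*N*(y-1)^2))/(2*L*(y-1)) \<le> 4*N*(y-1)/B"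
proof -
  have "L*N \<ge> 0" using L N by simp
  hence b0: "y*(2+L*N) > 0" using y by (intro mult_pos_pos) auto
  hence Bp: "B > 0" using B by linarith
  have "B^2 \<ge> (y*(2+L*N))^2" using B b0 by (intro power_mono) auto
  moreover have "(y*(2+L*N))^2 \<ge> y^2 * (8*L*N)"
  proof -
    have "(2+L*N)^2 - 8*L*N = (2-L*N)^2" by (simp add: algebra_simps power2_eq_square)
    hence "(2+L*N)^2 \<ge> 8*L*N" by (metis diff_ge_0_iff_ge zero_le_power2)
    thus ?thesis by (simp add: power_mult_distrib mult_left_mono)
  qed
  moreover have "y^2 * (8*L*N) \<ge> (y-1)^2 * (8*L*N)"
    using y L N by (intro mult_right_mono power_mono) auto
  moreover have "(y-1)^2 * (8*L*N) = 8*L*N*(y-1)^2" by simp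
  ultimately have "8*L*N*(y-1)^2 \<le> B^2" by (metis order_trans)
  hence d: "B^2 - 8*L*N*(y-1)^2 \<ge> 0" by simp
  define S where "S = sqrt(B^2 - 8*L*N*(y-1)^2)"
  have S0: "S \<ge> 0" unfolding S_def using d by simp
  have S2: "S^2 = B^2 - 8*L*N*(y-1)^2" unfolding S_def by (rule real_sqrt_pow2[OF d])
  have "0 \<le> 8*L*N*(y-1)^2" using L N by simp
  hence "S \<le> sqrt (B^2)" unfolding S_def by (intro real_sqrt_le_mono) linarith
  hence SB: "S \<le> B" using Bp by simp
  have prod: "(B-S)*(B+S) = 8*L*N*(y-1)^2" using S2 by (simp add: algebra_simps power2_eq_square)
  have "(B-S)*B \<le> (B-S)*(B+S)" using SB S0 by (intro mult_left_mono) auto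
  hence le: "(B-S)*B \<le> 4*N*(y-1)*(2*L*(y-1))" using prod by (simp add: algebra_simps power2_eq_square)
  have den: "2*L*(y-1) > 0" using L y by simp
  have "(B-S)/(2*L*(y-1)) \<le> 4*N*(y-1)/B"
    using le den Bp by (simp add: divide_le_eq le_divide_eq mult.commute)
  thus ?thesis unfolding S_def .
qed

lemma sig12:
  fixes L N x A :: real
  assumes L: "L > 0" and x: "x > 1" and N: "N \<ge> 1" and A: "A \<ge> x*(1+L*(N-1))"
  shows "A/(2*L*(x-1)) \<le> (A + sqrt(A^2 - 4*L*(x-1)^2*(N-1)))/(2*L*(x-1))"
proof -
  have "L*(N-1) \<ge> 0" using L N by simp
  hence c0: "x*(1+L*(N-1)) > 0" using x by (intro mult_pos_pos) auto
  have "A^2 \<ge> (x*(1+L*(N-1)))^2" using A c0 by (intro power_mono) auto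
  moreover have "(x*(1+L*(N-1)))^2 \<ge> x^2 * (4*L*(N-1))"
  proof -
    have "(1+L*(N-1))^2 - 4*L*(N-1) = (1-L*(N-1))^2" by (simp add: algebra_simps power2_eq_square)
    hence "(1+L*(N-1))^2 \<ge> 4*L*(N-1)" by (metis diff_ge_0_iff_ge zero_le_power2)
    thus ?thesis by (simp add: power_mult_distrib mult_left_mono)
  qed
  moreover have "x^2 * (4*L*(N-1)) \<ge> (x-1)^2 * (4*L*(N-1))"
    using x L N by (intro mult_right_mono power_mono) auto
  moreover have "(x-1)^2 * (4*L*(N-1)) = 4*L*(x-1)^2*(N-1)" by simp
  ultimately have "4*L*(x-1)^2*(N-1) \<le> A^2" by (metis order_trans)
  hence d: "A^2 - 4*L*(x-1)^2*(N-1) \<ge> 0" by simp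
  have den: "2*L*(x-1) > 0" using L x by simp
  show ?thesis using d den by (intro divide_right_mono) auto
qed

lemma keyall:
  fixes n :: nat and L :: real
  assumes "n \<ge> 3" and "L > 1"
  shows "8*real n*L*(L^n-1)*(L^(n+2)-1) \<le> (L + real n - 1 + L^n*(1+L*(real n-1))) * (L^(n+2)*(2+L*real n) + (real n+2*L))"
proof -
  consider "n = 3" | "n = 4" | "n = 5" | "n \<ge> 6" using assms(1) by linarith
  then show ?thesis
  proof cases
    case 1
    have "L - 1 \<ge> 0" using assms by simp
    from poly3[OF this] show ?thesis using 1 by simp
  next
    case 2
    have "L - 1 \<ge> 0" using assms by simp
    from poly4[OF this] show ?thesis using 2 by simp
  next
    case 3
    have "L - 1 \<ge> 0" using assms by simp
    from poly5[OF this] show ?thesis using 3 by simp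
  next
    case 4
    have "real n \<ge> 6" using 4 by simp
    moreover have "L^n \<ge> 1" using one_le_power[of L n] assms by linarith
    moreover have "L^(n+2) \<ge> 1" using one_le_power[of L "n+2"] assms by linarith
    ultimately show ?thesis using key_big[of "real n" L "L^n" "L^(n+2)"] assms by simp
  qed
qed

theorem lemma2p5:
  fixes n :: nat and L :: real
  assumes "n \<ge> 3" and "L > 1"
  shows "(L^(n+2) * (2 + L * real n) + (real n + 2 * L)
           - sqrt ((L^(n+2) * (2 + L * real n) + (real n + 2 * L))^2
                   - 8 * L * real n * (L^(n+2) - 1)^2))
         / (2 * L * (L^(n+2) - 1))
       \<le> ((L + real n - 1) + L^n * (1 + L * (real n - 1))
           + sqrt (((L + real n - 1) + L^n * (1 + L * (real n - 1)))^2
                   - 4 * L * (L^n - 1)^2 * (real n - 1)))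
         / (2 * L * (L^n - 1))"
proof -
  define x where "x = L^n"
  define y where "y = L^(n+2)"
  define A where "A = (L + real n - 1) + x * (1 + L * (real n - 1))"
  define B where "B = y * (2 + L * real n) + (real n + 2 * L)"
  have x1: "x > 1" unfolding x_def using assms one_less_power[of L n] by simp
  have y1: "y > 1" unfolding y_def using assms one_less_power[of L "n+2"] by simp
  have Bge: "B \<ge> y*(2+L*real n)" unfolding B_def using assms by simp
  have "L*real n \<ge> 0" using assms by simp
  hence "y*(2+L*real n) > 0" using y1 by (intro mult_pos_pos) auto
  hence Bp: "B > 0" using Bge by linarith
  have Age: "A \<ge> x*(1+L*(real n-1))" unfolding A_def using assms by simp
  have k: "8*real n*L*(x-1)*(y-1) \<le> A*B"
    using keyall[OF assms] by (simp only: A_def B_def x_def y_def)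
  have s21: "(B - sqrt(B^2 - 8*L*real n*(y-1)^2))/(2*L*(y-1)) \<le> 4*real n*(y-1)/B"
    by (rule sig21) (use assms y1 Bge in auto)
  have s12: "A/(2*L*(x-1)) \<le> (A + sqrt(A^2 - 4*L*(x-1)^2*(real n-1)))/(2*L*(x-1))"
    by (rule sig12) (use assms x1 Age in auto)
  have mid: "4*real n*(y-1)/B \<le> A/(2*L*(x-1))"
  proof -
    have den: "2*L*(x-1) > 0" using assms x1 by simp
    have "4*real n*(y-1)*(2*L*(x-1)) \<le> A*B" using k by (simp add: algebra_simps)
    thus ?thesis using den Bp by (simp add: divide_le_eq le_divide_eq mult.commute)
  qed
  have "(B - sqrt(B^2 - 8*L*real n*(y-1)^2))/(2*L*(y-1)) \<le> (A + sqrt(A^2 - 4*L*(x-1)^2*(real n-1)))/(2*L*(x-1))"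
    using s21 mid s12 by linarith
  thus ?thesis by (simp only: A_def B_def x_def y_def)
qed

end
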